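(* Let $a,b\ge 0$ and $t\ge 1$ be integers and let $A_1,\dots,A_n,B_1,\dots,B_n$ be subsets of a universe such that $|A_i|\le a$, $|B_i|\le b$ and $A_i\cap B_i=\emptyset$ for every $i\in [n]$, and $B_i\neq B_j$ for all distinct $i,j\in [n]$. If $n> b!\,(t(1+2a)-1)^b$, then there is a subset $I\subseteq [n]$ of size $t$ such that $A_i\cap B_j=\emptyset$ for all $i,j\in I$. *)

theory Defs
  imports Main
begin

end

theory Submission
  imports Defs
begin

lemma graph_indep:
  fixes E :: "'i \<Rightarrow> 'i \<Rightarrow> bool"
  assumes "finite V" "\<forall>u\<in>V. card {v\<in>V. u\<noteq>v \<and> E u v} \<le> a" "t*(2*a+1) \<le> card V"
  shows "\<exists>I\<subseteq>V. card I = t \<and> (\<forall>i\<in>I. \<forall>j\<in>I. i\<noteq>j \<longrightarrow> \<not> E i j)"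
  using assms
proof (induction t arbitrary: V)
  case 0 then show ?case by (intro exI[of _ "{}"]) auto
next
  case (Suc t)
  have cs: "card {u\<in>V. P u} = (\<Sum>u\<in>V. if P u then 1 else 0)" for P
    using Suc.prems(1) by (subst card_eq_sum, subst sum.inter_filter) auto
  have "(\<Sum>v\<in>V. card {u\<in>V. u\<noteq>v \<and> E u v}) = (\<Sum>v\<in>V. \<Sum>u\<in>V. if u\<noteq>v \<and> E u v then 1 else 0)"
    by (simp only: cs)
  also have "\<dots> = (\<Sum>u\<in>V. \<Sum>v\<in>V. if u\<noteq>v \<and> E u v then 1 else 0)" by (rule sum.swap)
  also have "\<dots> = (\<Sum>u\<in>V. card {v\<in>V. u\<noteq>v \<and> E u v})"
    by (simp only: cs)
  also have "\<dots> \<le> card V * a" using Suc.prems(2) sum_bounded_above[of V "\<lambda>u. card {v\<in>V. u\<noteq>v \<and> E u v}" a] by simp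
  finally have sb: "(\<Sum>v\<in>V. card {u\<in>V. u\<noteq>v \<and> E u v}) \<le> card V * a" .
  have "V \<noteq> {}" using Suc.prems(3) by auto
  obtain v where v: "v \<in> V" "card {u\<in>V. u\<noteq>v \<and> E u v} \<le> a"
  proof (rule ccontr)
    assume "\<not> thesis"
    then have "\<forall>v\<in>V. a + 1 \<le> card {u\<in>V. u\<noteq>v \<and> E u v}" using that by force
    then have "card V * (a+1) \<le> (\<Sum>v\<in>V. card {u\<in>V. u\<noteq>v \<and> E u v})"
      using sum_bounded_below[of V "a+1" "\<lambda>v. card {u\<in>V. u\<noteq>v \<and> E u v}"] by simp
    with sb have "card V * (a+1) \<le> card V * a" by linarith
    with \<open>V \<noteq> {}\<close> Suc.prems(1) show False by simp
  qed
  define N where "N = {u\<in>V. u\<noteq>v \<and> E u v} \<union> {u\<in>V. v\<noteq>u \<and> E v u}"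
  have "card N \<le> 2*a"
  proof -
    have "card N \<le> card {u\<in>V. u\<noteq>v \<and> E u v} + card {u\<in>V. v\<noteq>u \<and> E v u}"
      unfolding N_def by (rule card_Un_le)
    then show ?thesis using v Suc.prems(2) by fastforce
  qed
  define V' where "V' = V - insert v N"
  have fin: "finite (insert v N)" using Suc.prems(1) unfolding N_def by auto
  have "card (insert v N) \<le> Suc (card N)" using fin by (simp add: card_insert_if)
  then have "card (insert v N) \<le> 2*a+1" using \<open>card N \<le> 2*a\<close> by linarith
  moreover have "card V' = card V - card (insert v N)"
    unfolding V'_def using fin by (intro card_Diff_subset) (auto simp: N_def v)
  ultimately have "t*(2*a+1) \<le> card V'" using Suc.prems(3) by simp
  moreover have "\<forall>u\<in>V'. card {w\<in>V'. u\<noteq>w \<and> E u w} \<le> a"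
  proof
    fix u assume "u \<in> V'"
    then have "u \<in> V" by (simp add: V'_def)
    have "card {w\<in>V'. u\<noteq>w \<and> E u w} \<le> card {w\<in>V. u\<noteq>w \<and> E u w}"
      by (rule card_mono) (auto simp: Suc.prems(1) V'_def)
    then show "card {w\<in>V'. u\<noteq>w \<and> E u w} \<le> a" using Suc.prems(2) \<open>u \<in> V\<close> by fastforce
  qed
  moreover have "finite V'" using Suc.prems(1) by (simp add: V'_def)
  ultimately obtain I where I: "I \<subseteq> V'" "card I = t" "\<forall>i\<in>I. \<forall>j\<in>I. i\<noteq>j \<longrightarrow> \<not> E i j"
    using Suc.IH by blast
  have "v \<notin> I" using I(1) by (auto simp: V'_def)
  have fI: "finite I" using I(1) \<open>finite V'\<close> finite_subset by blast
  show ?case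
  proof (intro exI[of _ "insert v I"] conjI)
    show "insert v I \<subseteq> V" using I(1) v(1) by (auto simp: V'_def)
    show "card (insert v I) = Suc t" using fI \<open>v \<notin> I\<close> I(2) by simp
    show "\<forall>i\<in>insert v I. \<forall>j\<in>insert v I. i \<noteq> j \<longrightarrow> \<not> E i j"
      using I(1,3) by (auto simp: V'_def N_def)
  qed
qed

lemma main:
  fixes s a t :: nat
  assumes s1: "s \<ge> 1" and st: "s + 1 = t*(2*a+1)"
  shows "finite S \<Longrightarrow> (\<forall>i\<in>S. finite (A i) \<and> card (A i) \<le> a) \<Longrightarrow> (\<forall>i\<in>S. finite (B i) \<and> card (B i) \<le> b)
    \<Longrightarrow> (\<forall>i\<in>S. A i \<inter> B i = {}) \<Longrightarrow> inj_on B S \<Longrightarrow> fact b * s^b < card S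
    \<Longrightarrow> \<exists>I\<subseteq>S. card I = t \<and> (\<forall>i\<in>I. \<forall>j\<in>I. A i \<inter> B j = {})"
proof (induction b arbitrary: S B)
  case 0
  have "B ` S \<subseteq> {{}}" using "0.prems"(3) by auto
  then have "card (B ` S) \<le> 1" using card_mono[of "{{}}" "B ` S"] by simp
  then have "card S \<le> 1" using "0.prems"(5) card_image by metis
  with "0.prems"(6) show ?case by simp
next
  case (Suc b)
  define D where "D M \<longleftrightarrow> (\<forall>i\<in>M. \<forall>j\<in>M. i\<noteq>j \<longrightarrow> B i \<inter> B j = {})" for M
  obtain M where M: "M \<subseteq> S" "D M" "\<forall>i\<in>S-M. \<not> D (insert i M)"
  proof -
    have "finite {M. M \<subseteq> S \<and> D M}" using Suc.prems(1) by auto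
    moreover have "{} \<in> {M. M \<subseteq> S \<and> D M}" by (simp add: D_def)
    ultimately obtain M where M1: "M \<in> {M. M \<subseteq> S \<and> D M}" and M2: "\<forall>M'\<in>{M. M \<subseteq> S \<and> D M}. M \<le> M' \<longrightarrow> M = M'"
      using finite_has_maximal[of "{M. M \<subseteq> S \<and> D M}"] by blast
    have "\<forall>i\<in>S-M. \<not> D (insert i M)"
    proof (intro ballI notI)
      fix i assume i: "i \<in> S - M" and d: "D (insert i M)"
      then have "insert i M \<in> {M. M \<subseteq> S \<and> D M}" using M1 by auto
      then have "M = insert i M" using M2 by (meson subset_insertI)
      then show False using i by auto
    qed
    then show ?thesis using that M1 by blast
  qed
  have finM: "finite M" using M(1) Suc.prems(1) finite_subset by blast
  show ?case
  proof (cases "s+1 \<le> card M")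
    case True
    then obtain M' where M': "M' \<subseteq> M" "card M' = s+1" "finite M'" by (meson obtain_subset_with_card_n)
    have "\<forall>u\<in>M'. card {v\<in>M'. u\<noteq>v \<and> A u \<inter> B v \<noteq> {}} \<le> a"
    proof
      fix u assume u: "u \<in> M'"
      let ?f = "\<lambda>v. SOME x. x \<in> A u \<inter> B v"
      have fv: "?f v \<in> A u \<inter> B v" if "A u \<inter> B v \<noteq> {}" for v by (rule someI_ex) (use that in blast)
      have "inj_on ?f {v\<in>M'. u\<noteq>v \<and> A u \<inter> B v \<noteq> {}}"
      proof (rule inj_onI)
        fix v w assume v: "v \<in> {v\<in>M'. u\<noteq>v \<and> A u \<inter> B v \<noteq> {}}" and w: "w \<in> {v\<in>M'. u\<noteq>v \<and> A u \<inter> B v \<noteq> {}}" and eq: "?f v = ?f w"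
        have fb: "?f v \<in> B v" "?f w \<in> B w" using fv v w by auto
        show "v = w"
        proof (rule ccontr)
          assume "v \<noteq> w"
          moreover have "v \<in> M" "w \<in> M" using v w M'(1) by auto
          ultimately have "B v \<inter> B w = {}" using M(2) unfolding D_def by blast
          then show False using fb eq by auto
        qed
      qed
      moreover have "?f ` {v\<in>M'. u\<noteq>v \<and> A u \<inter> B v \<noteq> {}} \<subseteq> A u" using fv by auto
      moreover have "finite (A u)" using Suc.prems(2) M(1) M'(1) u by blast
      ultimately have "card {v\<in>M'. u\<noteq>v \<and> A u \<inter> B v \<noteq> {}} \<le> card (A u)"
        by (rule card_inj_on_le)
      then show "card {v\<in>M'. u\<noteq>v \<and> A u \<inter> B v \<noteq> {}} \<le> a"
        using Suc.prems(2) M(1) M'(1) u by (meson le_trans subsetD)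
    qed
    note od = this
    have ct: "t*(2*a+1) \<le> card M'" using M'(2) st by simp
    obtain I where I: "I \<subseteq> M'" "card I = t" "\<forall>i\<in>I. \<forall>j\<in>I. i\<noteq>j \<longrightarrow> \<not> A i \<inter> B j \<noteq> {}"
      using graph_indep[where V=M' and a=a and E="\<lambda>i j. A i \<inter> B j \<noteq> {}" and t=t, OF M'(3) od ct] by blast
    have IS: "I \<subseteq> S" using I(1) M(1) M'(1) by blast
    show ?thesis
    proof (intro exI[of _ I] conjI IS I(2) ballI)
      fix i j assume i: "i \<in> I" and j: "j \<in> I"
      show "A i \<inter> B j = {}"
      proof (cases "i = j")
        case True then show ?thesis using Suc.prems(4) IS i by blast
      next
        case False then show ?thesis using I(3) i j by blast
      qed
    qed
  next
    case False
    define F where "F = fact b * s^b"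
    have F1: "F \<ge> 1" using s1 by (simp add: F_def)
    define Z where "Z = {i\<in>S. B i = {}}"
    have ZM: "Z \<subseteq> M"
    proof
      fix i assume "i \<in> Z"
      show "i \<in> M"
      proof (rule ccontr)
        assume "i \<notin> M"
        moreover have "D (insert i M)" using M(2) \<open>i \<in> Z\<close> unfolding D_def Z_def by auto
        ultimately show False using M(3) \<open>i \<in> Z\<close> by (auto simp: Z_def)
      qed
    qed
    have "B ` Z \<subseteq> {{}}" by (auto simp: Z_def)
    then have "card (B ` Z) \<le> 1" using card_mono[of "{{}}" "B ` Z"] by simp
    moreover have "inj_on B Z" using Suc.prems(5) by (rule inj_on_subset) (auto simp: Z_def)
    ultimately have e1: "card Z \<le> 1" using card_image by metis
    define M1 where "M1 = M - Z"
    define U where "U = \<Union>(B ` M1)"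
    have finZ: "finite Z" using Suc.prems(1) by (simp add: Z_def)
    have "card (M - Z) = card M - card Z" using ZM finZ by (rule card_Diff_subset[rotated])
    moreover have "card Z \<le> card M" using ZM finM by (rule card_mono[rotated])
    ultimately have cM: "card M = card M1 + card Z" unfolding M1_def by linarith
    have finU: "finite U" using Suc.prems(3) M(1) finM by (auto simp: U_def M1_def)
    have "card U \<le> (\<Sum>j\<in>M1. card (B j))" unfolding U_def using finM M1_def card_UN_le by auto
    also have "\<dots> \<le> card M1 * Suc b" using sum_bounded_above[of M1 "\<lambda>j. card (B j)" "Suc b"] Suc.prems(3) M(1)
      by (auto simp: M1_def)
    finally have cU: "card U \<le> card M1 * Suc b" .
    define Sx where "Sx x = {i\<in>S. x \<in> B i}" for x
    have "S - Z \<subseteq> (\<Union>x\<in>U. Sx x)"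
    proof
      fix i assume i: "i \<in> S - Z"
      then have ne: "B i \<noteq> {}" by (auto simp: Z_def)
      have "\<exists>j\<in>M1. B i \<inter> B j \<noteq> {}"
      proof (cases "i \<in> M")
        case True then show ?thesis using i ne by (auto simp: M1_def)
      next
        case False
        then have "\<not> D (insert i M)" using M(3) i by auto
        then obtain j where "j \<in> M" "B i \<inter> B j \<noteq> {}" using M(2) unfolding D_def by blast
        moreover then have "j \<notin> Z" by (auto simp: Z_def)
        ultimately show ?thesis by (auto simp: M1_def)
      qed
      then show "i \<in> (\<Union>x\<in>U. Sx x)" using i by (auto simp: U_def Sx_def)
    qed
    moreover have "finite (\<Union>x\<in>U. Sx x)" using finU Suc.prems(1) by (auto simp: Sx_def)
    ultimately have "card (S - Z) \<le> card (\<Union>x\<in>U. Sx x)" by (rule card_mono[rotated])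
    also have "\<dots> \<le> (\<Sum>x\<in>U. card (Sx x))" using finU by (rule card_UN_le)
    finally have cSZ: "card (S - Z) \<le> (\<Sum>x\<in>U. card (Sx x))" .
    have "card (S - Z) = card S - card Z" using finZ by (rule card_Diff_subset) (auto simp: Z_def)
    moreover have "card Z \<le> card S" using Suc.prems(1) by (rule card_mono) (auto simp: Z_def)
    ultimately have cS: "card S = card (S - Z) + card Z" by linarith
    note cSZ
    moreover note cS
    ultimately obtain x where x: "x \<in> U" "F < card (Sx x)"
    proof -
      assume H: "\<And>x. x \<in> U \<Longrightarrow> F < card (Sx x) \<Longrightarrow> thesis"
      show thesis
      proof (rule ccontr)
        assume "\<not> thesis"
        then have "\<forall>x\<in>U. card (Sx x) \<le> F" using H by force
        then have "(\<Sum>x\<in>U. card (Sx x)) \<le> card U * F" using sum_bounded_above[of U "\<lambda>x. card (Sx x)" F] by simp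
        also have "\<dots> \<le> card M1 * (Suc b * F)" using cU by (metis mult.assoc mult_le_mono1)
        finally have a1: "card S \<le> card M1 * (Suc b * F) + card Z" using cSZ cS by linarith
        have G: "Suc b * F \<ge> 1" using F1 by simp
        have "card M1 * (Suc b * F) + card Z \<le> (card M1 + card Z) * (Suc b * F)"
          using G by (simp add: add_mult_distrib)
        also have "\<dots> \<le> s * (Suc b * F)" using False cM by simp
        also have "\<dots> = fact (Suc b) * s ^ Suc b" by (simp add: F_def fact_Suc algebra_simps)
        finally show False using a1 Suc.prems(6) by linarith
      qed
    qed
    have "\<exists>I\<subseteq>Sx x. card I = t \<and> (\<forall>i\<in>I. \<forall>j\<in>I. A i \<inter> (B j - {x}) = {})"
    proof (rule Suc.IH)
      show "finite (Sx x)" using Suc.prems(1) by (simp add: Sx_def)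
      show "\<forall>i\<in>Sx x. finite (A i) \<and> card (A i) \<le> a" using Suc.prems(2) by (simp add: Sx_def)
      show "\<forall>i\<in>Sx x. finite (B i - {x}) \<and> card (B i - {x}) \<le> b" using Suc.prems(3) by (auto simp: Sx_def)
      show "\<forall>i\<in>Sx x. A i \<inter> (B i - {x}) = {}" using Suc.prems(4) by (auto simp: Sx_def)
      show "inj_on (\<lambda>i. B i - {x}) (Sx x)"
      proof (rule inj_onI)
        fix i j assume "i \<in> Sx x" "j \<in> Sx x" "B i - {x} = B j - {x}"
        then have "x \<in> B i" "x \<in> B j" "B i - {x} = B j - {x}" by (auto simp: Sx_def)
        then have "B i = B j" by (metis insert_Diff)
        then show "i = j" using Suc.prems(5) \<open>i \<in> Sx x\<close> \<open>j \<in> Sx x\<close> by (auto simp: Sx_def inj_on_def)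
      qed
      show "fact b * s ^ b < card (Sx x)" using x F_def by simp
    qed
    then obtain I where I: "I \<subseteq> Sx x" "card I = t" "\<forall>i\<in>I. \<forall>j\<in>I. A i \<inter> (B j - {x}) = {}" by blast
    have "\<forall>i\<in>I. x \<notin> A i" using I(1) Suc.prems(4) by (auto simp: Sx_def)
    then have "\<forall>i\<in>I. \<forall>j\<in>I. A i \<inter> B j = {}" using I(3) by blast
    moreover have "I \<subseteq> S" using I(1) by (auto simp: Sx_def)
    ultimately show ?thesis using I(2) by blast
  qed
qed


theorem lemma4p5:
  fixes a b t n :: nat
    and A B :: "nat \<Rightarrow> 'u set"
  assumes "t \<ge> 1"
    and "\<And>i. i \<in> {1..n} \<Longrightarrow> finite (A i) \<and> card (A i) \<le> a"
    and "\<And>i. i \<in> {1..n} \<Longrightarrow> finite (B i) \<and> card (B i) \<le> b"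
    and "\<And>i. i \<in> {1..n} \<Longrightarrow> A i \<inter> B i = {}"
    and "\<And>i j. i \<in> {1..n} \<Longrightarrow> j \<in> {1..n} \<Longrightarrow> i \<noteq> j \<Longrightarrow> B i \<noteq> B j"
    and "n > fact b * (t * (1 + 2 * a) - 1) ^ b"
  shows "\<exists>I. I \<subseteq> {1..n} \<and> card I = t \<and> (\<forall>i\<in>I. \<forall>j\<in>I. A i \<inter> B j = {})"
proof (cases "t * (1 + 2 * a) - 1 = 0")
  case True
  have "n \<ge> 1" using assms(6) by linarith
  have "t * (1 + 2 * a) \<le> 1" using True by linarith
  then have "t = 1" using assms(1) by (metis le_antisym mult_1_right mult_le_mono2 le_add1 nat_mult_1 order_trans)
  show ?thesis using assms(4)[of 1] \<open>t = 1\<close> \<open>n \<ge> 1\<close> by (intro exI[of _ "{1}"]) auto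
next
  case False
  have st: "(t * (1 + 2 * a) - 1) + 1 = t * (2 * a + 1)" using assms(1) by (simp add: algebra_simps)
  show ?thesis
  proof (rule main[OF _ st])
    show "1 \<le> t * (1 + 2 * a) - 1" using False by linarith
    show "inj_on B {1..n}" using assms(5) by (meson inj_onI)
  qed (use assms in auto)
qed

end
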